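(* Suppose that $A,B\in\mathbb{S}^d$ and $K^\star\in\mathbb{S}^d_{\le1}$ satisfy $t_{\mathrm{mix}}(A)>4\cdot t_{\mathrm{mix}}(C(K^\star))$, where $C(K^\star):=(1-\|K^\star\|_{1\to1})A+BK^\star$. Then $\|K^\star\|_{1\to1}>1/(96\cdot t_{\mathrm{mix}}(C(K^\star)))$.
   Context: $\mathbb{S}^d$ is the set of $d\times d$ column-stochastic matrices, $\mathbb{S}^d_a:=\{aM:M\in\mathbb{S}^d\}$ and $\mathbb{S}^d_{\le1}:=\bigcup_{a\in[0,1]}\mathbb{S}^d_a$. $\|M\|_{1\to1}:=\sup_{\|x\|_1=1}\|Mx\|_1$. For $X\in\mathbb{S}^d$ with unique stationary distribution $\pi$, $D_X(t):=\sup_{p\in\Delta^d}\|X^tp-\pi\|_1$ and $t_{\mathrm{mix}}(X):=\min\{t\in\mathbb{N}:D_X(t)\le1/4\}$; if $X$ has no unique stationary distribution, $t_{\mathrm{mix}}(X):=\infty$. *)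

theory Defs
  imports "HOL-Analysis.Analysis" "HOL-Library.Extended_Nat"
begin

text \<open>d x d real matrices are modelled as real^'n^'n with a finite index type 'n (d = CARD('n)).
  Entry (i,j) is M $ i $ j; a column-stochastic matrix has nonnegative entries and
  every column sums to one.\<close>

definition col_stochastic :: "real^'n::finite^'n \<Rightarrow> bool" where
  "col_stochastic M \<longleftrightarrow> (\<forall>i j. M $ i $ j \<ge> 0) \<and> (\<forall>j. (\<Sum>i\<in>UNIV. M $ i $ j) = 1)"

definition sub_stochastic :: "real^'n::finite^'n \<Rightarrow> bool" where
  "sub_stochastic K \<longleftrightarrow> (\<exists>a M. 0 \<le> a \<and> a \<le> 1 \<and> col_stochastic M \<and> K = a *\<^sub>R M)"

definition l1norm :: "real^'n::finite \<Rightarrow> real" where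
  "l1norm x = (\<Sum>i\<in>UNIV. \<bar>x $ i\<bar>)"

definition norm11 :: "real^'n::finite^'n \<Rightarrow> real" where
  "norm11 M = Sup {l1norm (M *v x) | x. l1norm x = 1}"

definition prob_simplex :: "(real^'n::finite) set" where
  "prob_simplex = {p. (\<forall>i. p $ i \<ge> 0) \<and> (\<Sum>i\<in>UNIV. p $ i) = 1}"

definition stationary :: "real^'n::finite^'n \<Rightarrow> real^'n \<Rightarrow> bool" where
  "stationary X \<pi> \<longleftrightarrow> \<pi> \<in> prob_simplex \<and> X *v \<pi> = \<pi>"

definition dist_tv :: "real^'n::finite^'n \<Rightarrow> nat \<Rightarrow> real" where
  "dist_tv X t = (SUP p\<in>prob_simplex. l1norm (((\<lambda>v. X *v v) ^^ t) p - (THE \<pi>. stationary X \<pi>)))"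

definition t_mix :: "real^'n::finite^'n \<Rightarrow> enat" where
  "t_mix X = (if \<exists>!\<pi>. stationary X \<pi>
     then (if \<exists>t. dist_tv X t \<le> 1/4 then enat (LEAST t. dist_tv X t \<le> 1/4) else \<infinity>)
     else \<infinity>)"

end

theory Submission
  imports Defs
begin

definition vsum :: "real^'n::finite \<Rightarrow> real" where "vsum x = (\<Sum>i\<in>UNIV. x $ i)"

lemma l1_nonneg: "l1norm x \<ge> 0" unfolding l1norm_def by (simp add: sum_nonneg)
lemma l1_add: "l1norm (x + y) \<le> l1norm x + l1norm y"
  unfolding l1norm_def by (simp add: sum.distrib[symmetric] sum_mono abs_triangle_ineq)
lemma l1_diff: "l1norm (x - y) \<le> l1norm x + l1norm y"
  unfolding l1norm_def by (simp add: sum.distrib[symmetric] sum_mono abs_triangle_ineq4)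
lemma l1_scale: "l1norm (c *\<^sub>R x) = \<bar>c\<bar> * l1norm x"
  unfolding l1norm_def by (simp add: abs_mult sum_distrib_left)
lemma l1_sum: "l1norm (\<Sum>j\<in>S. f j) \<le> (\<Sum>j\<in>S. l1norm (f j))"
proof -
  have "l1norm (\<Sum>j\<in>S. f j) = (\<Sum>i\<in>UNIV. \<bar>\<Sum>j\<in>S. f j $ i\<bar>)" unfolding l1norm_def by (simp add: sum_component)
  also have "\<dots> \<le> (\<Sum>i\<in>UNIV. \<Sum>j\<in>S. \<bar>f j $ i\<bar>)" by (intro sum_mono sum_abs)
  also have "\<dots> = (\<Sum>j\<in>S. l1norm (f j))" unfolding l1norm_def by (rule sum.swap)
  finally show ?thesis .
qed
lemma l1_zero: "l1norm x = 0 \<Longrightarrow> x = 0"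
  unfolding l1norm_def by (subst (asm) sum_nonneg_eq_0_iff) (auto simp: vec_eq_iff)  

lemma basis_exp: "x = (\<Sum>j\<in>UNIV. x $ j *\<^sub>R axis j (1::real))"
  by (simp add: vec_eq_iff sum_component axis_def if_distrib cong: if_cong)

lemma simplex_l1: "p \<in> prob_simplex \<Longrightarrow> l1norm p = 1"
  unfolding prob_simplex_def l1norm_def by simp

lemma axis_simplex: "axis j (1::real) \<in> prob_simplex"
  unfolding prob_simplex_def by (simp add: axis_def)

lemma stoch_l1: assumes "col_stochastic X" shows "l1norm (X *v x) \<le> l1norm x"
proof -
  have "l1norm (X *v x) = (\<Sum>i\<in>UNIV. \<bar>\<Sum>j\<in>UNIV. X$i$j * x$j\<bar>)"
    unfolding l1norm_def by (simp add: matrix_vector_mult_def)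
  also have "\<dots> \<le> (\<Sum>i\<in>UNIV. \<Sum>j\<in>UNIV. X$i$j * \<bar>x$j\<bar>)"
    using assms unfolding col_stochastic_def
    by (intro sum_mono order.trans[OF sum_abs]) (simp add: abs_mult)
  also have "\<dots> = (\<Sum>j\<in>UNIV. (\<Sum>i\<in>UNIV. X$i$j) * \<bar>x$j\<bar>)"
    by (subst sum.swap) (simp add: sum_distrib_right)
  also have "\<dots> = l1norm x" using assms unfolding col_stochastic_def l1norm_def by simp
  finally show ?thesis .
qed

lemma stoch_vsum: assumes "col_stochastic X" shows "vsum (X *v x) = vsum x"
proof -
  have "vsum (X *v x) = (\<Sum>i\<in>UNIV. \<Sum>j\<in>UNIV. X$i$j * x$j)"
    unfolding vsum_def by (simp add: matrix_vector_mult_def)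
  also have "\<dots> = (\<Sum>j\<in>UNIV. (\<Sum>i\<in>UNIV. X$i$j) * x$j)"
    by (subst sum.swap) (simp add: sum_distrib_right)
  also have "\<dots> = vsum x" using assms unfolding col_stochastic_def vsum_def by simp
  finally show ?thesis .
qed

lemma stoch_simplex: assumes "col_stochastic X" "p \<in> prob_simplex" shows "X *v p \<in> prob_simplex"
proof -
  have "vsum (X *v p) = vsum p" by (rule stoch_vsum[OF assms(1)])
  moreover have "(X *v p) $ i \<ge> 0" for i using assms unfolding col_stochastic_def prob_simplex_def
    by (simp add: matrix_vector_mult_def sum_nonneg)
  ultimately show ?thesis using assms(2) unfolding prob_simplex_def vsum_def by auto
qed

lemma pow_linear: "linear ((\<lambda>v. (X::real^'n::finite^'n) *v v) ^^ t)"
  proof (induction t)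
  case 0 show ?case using linear_id by (simp add: id_def)
next
  case (Suc t) show ?case unfolding funpow.simps(2)
    by (rule linear_compose[OF Suc]) simp
qed

lemma pow_l1: assumes "col_stochastic X" shows "l1norm (((\<lambda>v. X *v v) ^^ t) x) \<le> l1norm x"
  by (induction t) (auto intro: order.trans[OF stoch_l1[OF assms]])

lemma pow_vsum: assumes "col_stochastic X" shows "vsum (((\<lambda>v. X *v v) ^^ t) x) = vsum x"
  by (induction t) (auto simp: stoch_vsum[OF assms])

lemma pow_simplex: assumes "col_stochastic X" "p \<in> prob_simplex" shows "((\<lambda>v. X *v v) ^^ t) p \<in> prob_simplex"
  by (induction t) (auto simp: stoch_simplex[OF assms(1)] assms(2))

lemma pow_fix: assumes "X *v p = p" shows "((\<lambda>v. X *v v) ^^ t) p = p"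
  by (induction t) (auto simp: assms)

lemma perturb:
  fixes F G :: "real^'n::finite \<Rightarrow> real^'n"
  assumes "linear F" "\<And>u. l1norm (F u) \<le> l1norm u" "\<And>u. l1norm (G u) \<le> l1norm u"
    "\<And>w. l1norm (F w - G w) \<le> e * l1norm w"
  shows "l1norm ((F ^^ t) x - (G ^^ t) x) \<le> real t * e * l1norm x"
proof (induction t)
  case 0 have "(F ^^ 0) x - (G ^^ 0) x = 0" by simp then show ?case by (simp add: l1norm_def)
next
  case (Suc t)
  define a :: "real^'n" where "a = axis undefined 1"
  have a1: "l1norm a = 1" unfolding a_def by (rule simplex_l1[OF axis_simplex])
  have e: "e \<ge> 0" using assms(4)[of a] l1_nonneg[of "F a - G a"] a1 by simp
  have "(F ^^ Suc t) x - (G ^^ Suc t) x = F ((F ^^ t) x - (G ^^ t) x) + (F ((G ^^ t) x) - G ((G ^^ t) x))"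
    by (simp add: linear_diff[OF assms(1)])
  hence "l1norm ((F ^^ Suc t) x - (G ^^ Suc t) x) \<le> l1norm (F ((F ^^ t) x - (G ^^ t) x)) + l1norm (F ((G ^^ t) x) - G ((G ^^ t) x))"
    using l1_add by metis
  also have "\<dots> \<le> real t * e * l1norm x + e * l1norm ((G ^^ t) x)"
    using Suc assms(2)[of "(F ^^ t) x - (G ^^ t) x"] assms(4)[of "(G ^^ t) x"] by linarith
  also have "l1norm ((G ^^ t) x) \<le> l1norm x"
    by (induction t) (auto intro: order.trans[OF assms(3)])
  hence "e * l1norm ((G ^^ t) x) \<le> e * l1norm x" using e by (simp add: mult_left_mono)
  finally show ?case by (simp add: algebra_simps)
qed

lemma contract:
  assumes "linear H" "\<And>j. l1norm (H (axis j 1) - \<pi>) \<le> c" "vsum x = 0"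
  shows "l1norm (H x) \<le> c * l1norm x"
proof -
  have "H x = (\<Sum>j\<in>UNIV. x $ j *\<^sub>R H (axis j 1))"
    by (subst basis_exp) (simp add: linear_sum[OF assms(1)] linear_cmul[OF assms(1)])
  also have "\<dots> = (\<Sum>j\<in>UNIV. x $ j *\<^sub>R (H (axis j 1) - \<pi>)) + (\<Sum>j\<in>UNIV. x $ j) *\<^sub>R \<pi>"
    by (simp add: scaleR_diff_right sum_subtractf scaleR_sum_left)
  also have "(\<Sum>j\<in>UNIV. x $ j) = 0" using assms(3) by (simp add: vsum_def)
  finally have "l1norm (H x) \<le> (\<Sum>j\<in>UNIV. l1norm (x $ j *\<^sub>R (H (axis j 1) - \<pi>)))"
    using l1_sum by simp
  also have "\<dots> \<le> (\<Sum>j\<in>UNIV. \<bar>x $ j\<bar> * c)"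
    by (intro sum_mono) (simp add: l1_scale assms(2) mult_left_mono)
  finally show ?thesis by (simp add: l1norm_def sum_distrib_left mult.commute)
qed

lemma simplex_compact: "compact (prob_simplex :: (real^'n::finite) set)"
unfolding compact_eq_bounded_closed
proof
  show "bounded (prob_simplex :: (real^'n::finite) set)"
    unfolding bounded_iff
    by (metis norm_le_l1_cart simplex_l1 l1norm_def)
  have "prob_simplex = (\<Inter>i. {p::real^'n. p $ i \<ge> 0}) \<inter> {p. (\<Sum>i\<in>UNIV. p $ i) = 1}"
    unfolding prob_simplex_def by auto
  also have "closed \<dots>"
    by (intro closed_Int closed_INT ballI closed_Collect_le closed_Collect_eq continuous_intros)
  finally show "closed (prob_simplex :: (real^'n::finite) set)" .
qed

lemma simplex_convex: "convex (prob_simplex :: (real^'n::finite) set)"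
  unfolding convex_def prob_simplex_def
  by (auto simp: sum.distrib sum_distrib_left[symmetric])

lemma stat_exists: assumes "col_stochastic X" shows "\<exists>p. stationary X p"
proof -
  have "\<exists>p\<in>prob_simplex. X *v p = p"
  proof (rule brouwer[OF simplex_compact simplex_convex])
    show "prob_simplex \<noteq> {}" using axis_simplex by blast
    show "continuous_on prob_simplex ((*v) X)" by (intro linear_continuous_on) simp
    show "(*v) X \<in> prob_simplex \<rightarrow> prob_simplex" using stoch_simplex[OF assms] by blast
  qed auto
  thus ?thesis unfolding stationary_def by auto
qed

lemma smul_mv: "((k::real) *\<^sub>R (X::real^'m::finite^'n::finite)) *v v = k *\<^sub>R (X *v v)"
  by (rule scaleR_matrix_vector_assoc[symmetric])

lemma norm11_sub: fixes M :: "real^'n::finite^'n" assumes "col_stochastic M" "0 \<le> a" shows "norm11 (a *\<^sub>R M) = a"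
  unfolding norm11_def
proof (rule cSup_eq_maximum)
  have "M *v axis undefined 1 \<in> prob_simplex" by (rule stoch_simplex[OF assms(1) axis_simplex])
  hence "l1norm ((a *\<^sub>R M) *v axis undefined 1) = a"
    by (simp add: smul_mv l1_scale assms(2) simplex_l1)
  moreover have "l1norm (axis undefined 1 :: real^'n) = 1" by (rule simplex_l1[OF axis_simplex])
  ultimately show "a \<in> {l1norm ((a *\<^sub>R M) *v x) |x. l1norm x = 1}"
    by (metis (mono_tags, lifting) CollectI)
  fix y assume "y \<in> {l1norm ((a *\<^sub>R M) *v x) |x. l1norm x = 1}"
    then obtain x where x: "y = l1norm ((a *\<^sub>R M) *v x)" "l1norm x = 1" by blast
    show "y \<le> a" using stoch_l1[OF assms(1), of x] x assms(2)
      by (simp add: smul_mv l1_scale mult_left_le)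
qed

lemma C_stoch: assumes "col_stochastic A" "col_stochastic B" "col_stochastic M" "0 \<le> a" "a \<le> 1"
  shows "col_stochastic ((1 - a) *\<^sub>R A + B ** (a *\<^sub>R M))"
proof -
  have nn: "(B ** (a *\<^sub>R M)) $ i $ j \<ge> 0" for i j
    using assms unfolding col_stochastic_def by (simp add: matrix_matrix_mult_def sum_nonneg)
  have cs: "(\<Sum>i\<in>UNIV. (B ** (a *\<^sub>R M)) $ i $ j) = a" for j
  proof -
    have "(\<Sum>i\<in>UNIV. (B ** (a *\<^sub>R M)) $ i $ j) = (\<Sum>i\<in>UNIV. \<Sum>k\<in>UNIV. B$i$k * (a * M$k$j))"
      by (simp add: matrix_matrix_mult_def)
    also have "\<dots> = (\<Sum>k\<in>UNIV. (\<Sum>i\<in>UNIV. B$i$k) * (a * M$k$j))"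
      by (subst sum.swap) (simp add: sum_distrib_right)
    also have "\<dots> = a * (\<Sum>k\<in>UNIV. M$k$j)" using assms(2) unfolding col_stochastic_def
      by (simp add: sum_distrib_left)
    finally show ?thesis using assms(3) unfolding col_stochastic_def by simp
  qed
  show ?thesis using assms nn cs unfolding col_stochastic_def
    by (auto simp: sum.distrib sum_distrib_left[symmetric] intro!: add_nonneg_nonneg)
qed

theorem lemma6:
  fixes A B K :: "real^'n::finite^'n"
  assumes "col_stochastic A" and "col_stochastic B" and "sub_stochastic K"
    and "t_mix A > 4 * t_mix ((1 - norm11 K) *\<^sub>R A + B ** K)"
  shows "norm11 K > 1 / (96 * real (the_enat (t_mix ((1 - norm11 K) *\<^sub>R A + B ** K))))"
proof (rule ccontr)
  obtain a M where a: "0 \<le> a" "a \<le> 1" and M: "col_stochastic M" and K: "K = a *\<^sub>R M"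
    using assms(3) unfolding sub_stochastic_def by blast
  have nK: "norm11 K = a" using norm11_sub[OF M a(1)] K by simp
  define C where "C = (1 - norm11 K) *\<^sub>R A + B ** K"
  have Cs: "col_stochastic C" unfolding C_def nK unfolding K by (rule C_stoch[OF assms(1,2) M a])
  have Cw: "C *v w = (1 - a) *\<^sub>R (A *v w) + a *\<^sub>R (B *v (M *v w))" for w
    unfolding C_def nK unfolding K by (simp add: matrix_vector_mult_add_rdistrib smul_mv matrix_scalar_ac
       matrix_vector_mul_assoc[symmetric])
  have AC: "l1norm (A *v w - C *v w) \<le> (2 * a) * l1norm w" for w
  proof -
    have "A *v w - C *v w = a *\<^sub>R (A *v w - B *v (M *v w))"
      unfolding Cw by (simp add: algebra_simps)
    hence "l1norm (A *v w - C *v w) = a * l1norm (A *v w - B *v (M *v w))"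
      using a by (simp add: l1_scale)
    also have "l1norm (A *v w - B *v (M *v w)) \<le> 2 * l1norm w"
      using l1_diff[of "A *v w" "B *v (M *v w)"] stoch_l1[OF assms(1), of w]
        stoch_l1[OF assms(2), of "M *v w"] stoch_l1[OF M, of w] by linarith
    finally show ?thesis using a by (simp add: mult_left_mono)
  qed
  have tC: "t_mix C \<noteq> \<infinity>"
    using assms(4) unfolding C_def[symmetric] by (cases "t_mix C") (auto simp: numeral_eq_enat)
  hence uC: "\<exists>!\<pi>. stationary C \<pi>" and exC: "\<exists>t. dist_tv C t \<le> 1/4"
    unfolding t_mix_def by (auto split: if_splits)
  define T where "T = (LEAST t. dist_tv C t \<le> 1/4)"
  have tCT: "t_mix C = enat T" unfolding t_mix_def T_def using uC exC by simp
  have DT: "dist_tv C T \<le> 1/4" unfolding T_def by (rule LeastI_ex[OF exC])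
  define \<pi>C where "\<pi>C = (THE \<pi>. stationary C \<pi>)"
  have piC: "stationary C \<pi>C" unfolding \<pi>C_def by (rule theI'[OF uC])
  hence piC1: "l1norm \<pi>C = 1" unfolding stationary_def using simplex_l1 by blast
  define F where "F = (*v) A"
  define G where "G = (*v) C"
  have colC: "l1norm ((G ^^ T) (axis j 1) - \<pi>C) \<le> 1/4" for j
  proof -
    have bdd: "bdd_above ((\<lambda>p. l1norm (((\<lambda>v. C *v v) ^^ T) p - \<pi>C)) ` prob_simplex)"
    proof (rule bdd_aboveI2)
      fix p :: "real^'n" assume "p \<in> prob_simplex"
      hence "l1norm (((\<lambda>v. C *v v) ^^ T) p) = 1" using pow_simplex[OF Cs] simplex_l1 by blast
      thus "l1norm (((\<lambda>v. C *v v) ^^ T) p - \<pi>C) \<le> 2" using l1_diff piC1 by (smt (verit))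
    qed
    have "l1norm ((G ^^ T) (axis j 1) - \<pi>C) \<le> dist_tv C T"
      unfolding dist_tv_def \<pi>C_def[symmetric] G_def
      by (rule cSUP_upper[OF axis_simplex bdd[unfolded]])
    with DT show ?thesis by simp
  qed
  assume "\<not> ?thesis"
  hence "a \<le> 1 / (96 * real T)" unfolding C_def[symmetric] unfolding tCT nK by simp
  hence aT: "real T * a \<le> 1/96"
    by (cases "T = 0") (auto simp: field_simps)
  have pert: "l1norm ((F ^^ T) x - (G ^^ T) x) \<le> real T * (2 * a) * l1norm x" for x
    unfolding F_def G_def
    by (rule perturb) (use stoch_l1[OF assms(1)] stoch_l1[OF Cs] AC in auto)
  define c :: real where "c = 13/48"
  have colA: "l1norm ((F ^^ T) (axis j 1) - \<pi>C) \<le> c" for j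
  proof -
    have "l1norm ((F ^^ T) (axis j 1) - (G ^^ T) (axis j 1)) \<le> 1/48"
    proof -
      have e1: "l1norm (axis j 1 :: real^'n) = 1" by (rule simplex_l1[OF axis_simplex])
      have "real T * (2 * a) * l1norm (axis j 1 :: real^'n) \<le> 1/48" using e1 aT by simp
      thus ?thesis using pert[of "axis j 1"] by linarith
    qed
    thus ?thesis using colC[of j] l1_add[of "(F ^^ T) (axis j 1) - (G ^^ T) (axis j 1)" "(G ^^ T) (axis j 1) - \<pi>C"]
      unfolding c_def by simp
  qed
  have linF: "linear (F ^^ T)" unfolding F_def by (rule pow_linear)
  have contr: "l1norm ((F ^^ T) x) \<le> c * l1norm x" if "vsum x = 0" for x
    by (rule contract[OF linF colA that])
  have vsF: "vsum ((F ^^ T) x) = vsum x" for x unfolding F_def by (rule pow_vsum[OF assms(1)])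
  obtain \<pi>A where piA: "stationary A \<pi>A" using stat_exists[OF assms(1)] by blast
  have fixA: "(F ^^ k) \<pi> = \<pi>" if "stationary A \<pi>" for \<pi> k
    unfolding F_def by (rule pow_fix) (use that in \<open>simp add: stationary_def\<close>)
  have uniqA: "\<pi> = \<pi>A" if "stationary A \<pi>" for \<pi>
  proof -
    have vs: "vsum (\<pi> - \<pi>A) = 0" using that piA
      unfolding stationary_def prob_simplex_def vsum_def by (simp add: sum_subtractf)
    have "(F ^^ T) (\<pi> - \<pi>A) = \<pi> - \<pi>A"
      by (simp add: linear_diff[OF linF] fixA[OF that] fixA[OF piA])
    hence "l1norm (\<pi> - \<pi>A) \<le> c * l1norm (\<pi> - \<pi>A)" using contr[OF vs] by simp
    hence "l1norm (\<pi> - \<pi>A) = 0" using l1_nonneg[of "\<pi> - \<pi>A"] unfolding c_def by linarith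
    thus ?thesis using l1_zero by force
  qed
  have uA: "\<exists>!\<pi>. stationary A \<pi>" using piA uniqA by blast
  have theA: "(THE \<pi>. stationary A \<pi>) = \<pi>A" using piA uniqA by blast
  have DA: "dist_tv A (T + T) \<le> 1/4"
    unfolding dist_tv_def theA
  proof (rule cSUP_least)
    show "prob_simplex \<noteq> {}" using axis_simplex by blast
    fix p :: "real^'n" assume p: "p \<in> prob_simplex"
    have vs: "vsum (p - \<pi>A) = 0" using p piA
      unfolding stationary_def prob_simplex_def vsum_def by (simp add: sum_subtractf)
    have eq: "((\<lambda>v. A *v v) ^^ (T + T)) p - \<pi>A = (F ^^ T) ((F ^^ T) (p - \<pi>A))"
      unfolding F_def[symmetric] funpow_add
      by (simp add: linear_diff[OF linF] fixA[OF piA])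
    have "l1norm ((F ^^ T) ((F ^^ T) (p - \<pi>A))) \<le> c * l1norm ((F ^^ T) (p - \<pi>A))"
      by (rule contr) (simp add: vsF vs)
    also have "\<dots> \<le> c * (c * l1norm (p - \<pi>A))"
      by (rule mult_left_mono[OF contr[OF vs]]) (simp add: c_def)
    also have "l1norm (p - \<pi>A) \<le> 2"
      using l1_diff[of p \<pi>A] simplex_l1[OF p] piA simplex_l1 unfolding stationary_def by force
    hence "c * (c * l1norm (p - \<pi>A)) \<le> 1/4" unfolding c_def by simp
    finally show "l1norm (((\<lambda>v. A *v v) ^^ (T + T)) p - \<pi>A) \<le> 1/4" unfolding eq .
  qed
  have "t_mix A = enat (LEAST t. dist_tv A t \<le> 1/4)"
    unfolding t_mix_def using uA DA by auto
  also have "\<dots> \<le> enat (T + T)" by (simp only: enat_ord_simps) (rule Least_le[of "\<lambda>t. dist_tv A t \<le> 1/4", OF DA])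
  also have "\<dots> \<le> 4 * t_mix C" unfolding tCT by (simp add: numeral_eq_enat)
  finally show False using assms(4) unfolding C_def[symmetric] by simp
qed

end
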